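(* Let $E$ be a classification instance with feature set $F$ containing at least one positive and at least one negative example. Then $|E|\le 2\binom{|F|}{\delta_{\max}}D_{\max}^{\delta_{\max}}$.
   Context: A classification instance (CI) $E=E^+\cup E^-$ is a finite set (no repetitions) of examples $e:F\to\mathbb{Z}$ over a common feature set $F$, partitioned into positive examples $E^+$ and negative examples $E^-$. For examples $e,e'$, $\lambda(e,e')$ is the set of features on which they differ; $\delta_{\max}=\max_{e^+\in E^+,e^-\in E^-}|\lambda(e^+,e^-)|$. $D_{\max}=\max_{f\in F}|\{e(f):e\in E\}|$. *)

theory Defs
  imports "HOL-Library.FuncSet"
begin

definition is_CI :: "'f set \<Rightarrow> ('f \<Rightarrow> int) set \<Rightarrow> ('f \<Rightarrow> int) set \<Rightarrow> bool" where
  "is_CI F Ep En \<longleftrightarrow> finite F \<and> finite (Ep \<union> En) \<and> Ep \<inter> En = {}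
     \<and> Ep \<union> En \<subseteq> extensional F"

definition lam :: "'f set \<Rightarrow> ('f \<Rightarrow> int) \<Rightarrow> ('f \<Rightarrow> int) \<Rightarrow> 'f set" where
  "lam F e e' = {f \<in> F. e f \<noteq> e' f}"

definition delta_max :: "'f set \<Rightarrow> ('f \<Rightarrow> int) set \<Rightarrow> ('f \<Rightarrow> int) set \<Rightarrow> nat" where
  "delta_max F Ep En = Max {card (lam F ep en) | ep en. ep \<in> Ep \<and> en \<in> En}"

definition D_max :: "'f set \<Rightarrow> ('f \<Rightarrow> int) set \<Rightarrow> nat" where
  "D_max F E = Max ((\<lambda>f. card ((\<lambda>e. e f) ` E)) ` F)"

end

theory Submission
  imports Defs
begin

lemma lam_sym: "lam F a b = lam F b a"
  unfolding lam_def by auto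

lemma count_bound:
  fixes F :: "'f set" and A E :: "('f \<Rightarrow> int) set"
  assumes fF: "finite F" and fE: "finite E" and AE: "A \<subseteq> E" and ext: "E \<subseteq> extensional F"
    and e0: "e0 \<in> extensional F"
    and lamb: "\<And>e. e \<in> A \<Longrightarrow> card (lam F e0 e) \<le> d"
    and dF: "d \<le> card F"
    and Db: "\<And>f. f \<in> F \<Longrightarrow> card ((\<lambda>e. e f) ` E) \<le> D"
  shows "card A \<le> (card F choose d) * D ^ d"
proof -
  define V where "V = (\<lambda>f. (\<lambda>e. e f) ` E)"
  define SS where "SS = {S. S \<subseteq> F \<and> card S = d}"
  define T where "T = (SIGMA S:SS. PiE S V)"
  have ex: "\<exists>S. lam F e0 e \<subseteq> S \<and> S \<subseteq> F \<and> card S = d" if "e \<in> A" for e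
  proof -
    have lF: "lam F e0 e \<subseteq> F" unfolding lam_def by auto
    have fl: "finite (lam F e0 e)" using lF fF finite_subset by blast
    have "d - card (lam F e0 e) \<le> card (F - lam F e0 e)"
      using card_Diff_subset[OF fl lF] dF by auto
    then obtain U where U: "U \<subseteq> F - lam F e0 e" "card U = d - card (lam F e0 e)" "finite U"
      using obtain_subset_with_card_n by metis
    have "card (lam F e0 e \<union> U) = card (lam F e0 e) + card U"
      using U fl by (intro card_Un_disjoint) auto
    also have "\<dots> = d" using U lamb[OF that] by auto
    finally show ?thesis using U lF by (intro exI[of _ "lam F e0 e \<union> U"]) auto
  qed
  define Sf where "Sf = (\<lambda>e. SOME S. lam F e0 e \<subseteq> S \<and> S \<subseteq> F \<and> card S = d)"
  have Sf: "lam F e0 e \<subseteq> Sf e \<and> Sf e \<subseteq> F \<and> card (Sf e) = d" if "e \<in> A" for e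
    unfolding Sf_def using someI_ex[OF ex[OF that]] .
  define g where "g = (\<lambda>e. (Sf e, restrict e (Sf e)))"
  have inj: "inj_on g A"
  proof (rule inj_onI)
    fix x y assume x: "x \<in> A" and y: "y \<in> A" and eq: "g x = g y"
    have S: "Sf x = Sf y" and r: "restrict x (Sf x) = restrict y (Sf y)"
      using eq unfolding g_def by auto
    show "x = y"
    proof
      fix f
      show "x f = y f"
      proof (cases "f \<in> Sf x")
        case True
        then show ?thesis using r S by (metis restrict_apply')
      next
        case False
        show ?thesis
        proof (cases "f \<in> F")
          case True
          have "f \<notin> lam F e0 x" "f \<notin> lam F e0 y" using Sf[OF x] Sf[OF y] False S by auto
          then show ?thesis using True unfolding lam_def by auto
        next
          case False
          have "x \<in> extensional F" "y \<in> extensional F" using x y AE ext by auto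
          then show ?thesis using False by (metis extensional_arb)
        qed
      qed
    qed
  qed
  have gT: "g ` A \<subseteq> T"
    unfolding T_def g_def SS_def V_def using Sf AE by auto
  have fSS: "finite SS" unfolding SS_def using fF by auto
  have fT: "finite T" unfolding T_def V_def using fSS fE
    by (intro finite_SigmaI finite_PiE) (auto simp: SS_def intro: finite_subset[OF _ fF])
  have "card A \<le> card T" using card_inj_on_le[OF inj gT fT] .
  also have "card T = (\<Sum>S\<in>SS. card (PiE S V))"
    unfolding T_def using fSS by (intro card_SigmaI) (auto simp: SS_def V_def intro!: finite_PiE finite_subset[OF _ fF] fE)
  also have "\<dots> \<le> (\<Sum>S\<in>SS. D ^ d)"
  proof (rule sum_mono)
    fix S assume S: "S \<in> SS"
    have fS: "finite S" using S fF unfolding SS_def by (auto intro: finite_subset)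
    have "card (PiE S V) = (\<Prod>f\<in>S. card (V f))" using card_PiE[OF fS] .
    also have "\<dots> \<le> (\<Prod>f\<in>S. D)"
      using S Db unfolding SS_def V_def by (intro prod_mono) auto
    also have "\<dots> = D ^ d" using S unfolding SS_def by simp
    finally show "card (PiE S V) \<le> D ^ d" .
  qed
  also have "\<dots> = card SS * D ^ d" by simp
  also have "card SS = card F choose d" unfolding SS_def using n_subsets[OF fF] .
  finally show ?thesis .
qed

theorem lemma8:
  fixes F :: "'f set" and Ep En :: "('f \<Rightarrow> int) set"
  assumes "is_CI F Ep En" and "Ep \<noteq> {}" and "En \<noteq> {}"
  shows "card (Ep \<union> En) \<le>
     2 * (card F choose delta_max F Ep En) * D_max F (Ep \<union> En) ^ delta_max F Ep En"
proof -
  note ci = assms(1)[unfolded is_CI_def]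
  have fF: "finite F" and fE: "finite (Ep \<union> En)" and disj: "Ep \<inter> En = {}"
    and ext: "Ep \<union> En \<subseteq> extensional F" using ci by auto
  obtain p where p: "p \<in> Ep" using assms(2) by auto
  obtain q where q: "q \<in> En" using assms(3) by auto
  define d where "d = delta_max F Ep En"
  define D where "D = D_max F (Ep \<union> En)"
  define M where "M = {card (lam F ep en) | ep en. ep \<in> Ep \<and> en \<in> En}"
  have M_eq: "M = (\<lambda>(a,b). card (lam F a b)) ` (Ep \<times> En)" unfolding M_def by auto
  have fM: "finite M" unfolding M_eq using fE by auto
  have Mle: "card (lam F a b) \<le> d" if "a \<in> Ep" "b \<in> En" for a b
    unfolding d_def delta_max_def M_def[symmetric] using fM that
    by (intro Max_ge) (auto simp: M_def)
  have "d \<in> M" unfolding d_def delta_max_def M_def[symmetric] using fM p q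
    by (intro Max_in) (auto simp: M_def)
  then have dF: "d \<le> card F" unfolding M_def lam_def using fF
    by (auto intro: card_mono)
  have Fne: "F \<noteq> {}"
  proof
    assume "F = {}"
    then have "p \<in> extensional {}" "q \<in> extensional {}" using ext p q \<open>F = {}\<close> by blast+
    then show False using disj p q by (simp add: extensional_empty) blast
  qed
  have Db: "card ((\<lambda>e. e f) ` (Ep \<union> En)) \<le> D" if "f \<in> F" for f
    unfolding D_def D_max_def using fF that by (intro Max_ge) auto
  have pe: "p \<in> extensional F" "q \<in> extensional F" using ext p q by auto
  have c1: "card Ep \<le> (card F choose d) * D ^ d"
    using count_bound[OF fF fE _ ext pe(2) _ dF Db] Mle q
    by (metis Un_upper1 lam_sym)
  have c2: "card En \<le> (card F choose d) * D ^ d"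
    using count_bound[OF fF fE _ ext pe(1) _ dF Db] Mle p
    by (metis Un_upper2)
  have "card (Ep \<union> En) \<le> card Ep + card En" by (rule card_Un_le)
  also have "\<dots> \<le> 2 * (card F choose d) * D ^ d" using c1 c2 by simp
  finally show ?thesis unfolding d_def D_def .
qed

end
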